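(* Let $F$ be a Banach lattice and $E\subset F$ a closed subspace such that every uo-null sequence in $E$ is norm-null. Then $E$ is dispersed.
   Context: A net $(x_\alpha)$ in $F$ order converges to $0$ if there is a net $(g_\beta)$ with $g_\beta\downarrow0$ such that for every $\beta$ there is $\alpha_0$ with $|x_\alpha|\le g_\beta$ for $\alpha\ge\alpha_0$; $(x_\alpha)$ is uo-null if $|x_\alpha|\wedge h$ order converges to $0$ for every $h\in F_+$. A closed subspace $E$ is dispersed if there is no sequence of unit vectors $(e_n)\subset E$ and disjoint sequence $(f_n)\subset F$ ($|f_n|\wedge|f_m|=0$, $n\ne m$) with $\|e_n-f_n\|\to0$. *)

theory Defs
  imports "HOL-Analysis.Analysis"
begin

class banach_lattice = banach + ordered_real_vector + lattice +
  assumes lattice_norm: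
    "sup x (- x) \<le> sup y (- y) \<Longrightarrow> norm x \<le> norm y"

definition labs :: "'a::banach_lattice \<Rightarrow> 'a" where
  "labs x = sup x (- x)"

text \<open>A decreasing net g with g \<down> 0 is represented by its range D:
  a nonempty downward directed set whose infimum is 0.\<close>
definition down_to_zero :: "'a::banach_lattice set \<Rightarrow> bool" where
  "down_to_zero D \<longleftrightarrow> D \<noteq> {}
     \<and> (\<forall>a\<in>D. \<forall>b\<in>D. \<exists>c\<in>D. c \<le> a \<and> c \<le> b)
     \<and> (\<forall>d\<in>D. 0 \<le> d)
     \<and> (\<forall>l. (\<forall>d\<in>D. l \<le> d) \<longrightarrow> l \<le> 0)"

definition order_null :: "(nat \<Rightarrow> 'a::banach_lattice) \<Rightarrow> bool" where
  "order_null x \<longleftrightarrow> (\<exists>D. down_to_zero D \<and>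
     (\<forall>g\<in>D. \<exists>N. \<forall>n\<ge>N. labs (x n) \<le> g))"

definition uo_null :: "(nat \<Rightarrow> 'a::banach_lattice) \<Rightarrow> bool" where
  "uo_null x \<longleftrightarrow> (\<forall>h. 0 \<le> h \<longrightarrow> order_null (\<lambda>n. inf (labs (x n)) h))"

definition disjoint_seq :: "(nat \<Rightarrow> 'a::banach_lattice) \<Rightarrow> bool" where
  "disjoint_seq f \<longleftrightarrow> (\<forall>n m. n \<noteq> m \<longrightarrow> inf (labs (f n)) (labs (f m)) = 0)"

definition dispersed :: "'a::banach_lattice set \<Rightarrow> bool" where
  "dispersed E \<longleftrightarrow> \<not> (\<exists>e f. (\<forall>n. e n \<in> E \<and> norm (e n) = 1) \<and> disjoint_seq f
      \<and> (\<lambda>n. norm (e n - f n)) \<longlonglongrightarrow> 0)"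

end

theory Submission
  imports Defs "HOL-Library.Lattice_Algebras"
begin


context banach_lattice begin
subclass lattice_ab_group_add ..
end

lemma labs_nonneg: "0 \<le> labs (x::'a::banach_lattice)"
proof -
  have "0 \<le> labs x + labs x"
  proof -
    have "x + (-x) \<le> labs x + labs x" unfolding labs_def
      by (intro add_mono) auto
    then show ?thesis by simp
  qed
  then show ?thesis by simp
qed

lemma lat_norm: "labs (x::'a::banach_lattice) \<le> labs y \<Longrightarrow> norm x \<le> norm y"
  unfolding labs_def by (rule lattice_norm)

lemma labs_pos: "0 \<le> (x::'a::banach_lattice) \<Longrightarrow> labs x = x"
proof -
  assume x: "0 \<le> x"
  have "-x \<le> 0" using x by simp
  then have "-x \<le> x" using x by (rule order_trans)
  then show ?thesis unfolding labs_def by (rule sup_absorb1)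
qed

lemma norm_labs: "norm (labs (x::'a::banach_lattice)) = norm x"
proof -
  have e: "labs (labs x) = labs x" by (rule labs_pos[OF labs_nonneg])
  have 1: "norm (labs x) \<le> norm x" by (rule lat_norm) (simp add: e)
  have 2: "norm x \<le> norm (labs x)" by (rule lat_norm) (simp add: e)
  from 1 2 show ?thesis by (rule antisym)
qed

lemma norm_mono_pos: "0 \<le> (x::'a::banach_lattice) \<Longrightarrow> x \<le> y \<Longrightarrow> norm x \<le> norm y"
proof -
  assume x: "0 \<le> x" and xy: "x \<le> y"
  have y: "0 \<le> y" using x xy by (rule order_trans)
  show ?thesis by (rule lat_norm) (simp add: labs_pos[OF x] labs_pos[OF y] xy)
qed

lemma le_labs: "(x::'a::banach_lattice) \<le> labs x"
  unfolding labs_def by simp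

lemma labs_triangle: "labs ((x::'a::banach_lattice) + y) \<le> labs x + labs y"
proof -
  have "-(x+y) = -x + -y" by simp
  also have "\<dots> \<le> labs x + labs y" unfolding labs_def by (intro add_mono) auto
  finally have 1: "-(x+y) \<le> labs x + labs y" .
  have 2: "x+y \<le> labs x + labs y" by (intro add_mono le_labs)
  show ?thesis unfolding labs_def[of "x+y"] using 1 2 by (rule sup_least[rotated])
qed

lemma inf_add_le: "0 \<le> (a::'a::banach_lattice) \<Longrightarrow> inf (a + b) h \<le> a + inf b h"
proof -
  assume "0 \<le> a"
  have "inf (a + b) h \<le> inf (a + b) (a + h)"
    using \<open>0 \<le> a\<close> by (intro inf_mono) (auto simp: add_increasing)
  also have "\<dots> = a + inf b h" by (simp add: add_inf_distrib_left)
  finally show ?thesis .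
qed

definition negp :: "'a::banach_lattice \<Rightarrow> 'a" where "negp x = sup (-x) 0"

lemma negp_lip: "labs (negp x - negp y) \<le> labs ((x::'a::banach_lattice) - y)"
proof -
  have A: "negp a \<le> negp b + labs (a - b)" for a b :: 'a
  proof -
    have "-a \<le> -b + labs (a - b)"
      using le_labs[of "b - a"] by (simp add: labs_def algebra_simps sup_commute)
    also have "\<dots> \<le> negp b + labs (a - b)" unfolding negp_def by (intro add_mono) auto
    finally have 1: "-a \<le> negp b + labs (a - b)" .
    have 2: "0 \<le> negp b + labs (a - b)" unfolding negp_def
      by (rule add_nonneg_nonneg[OF sup.cobounded2 labs_nonneg])
    show ?thesis using 1 2 unfolding negp_def by simp
  qed
  have "labs (y - x) = labs (x - y)" unfolding labs_def by (simp add: sup_commute)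
  have 1: "negp x - negp y \<le> labs (x - y)" using A[of x y] by (metis diff_le_eq add.commute)
  have 2: "-(negp x - negp y) \<le> labs (x - y)" using A[of y x] \<open>labs (y - x) = labs (x - y)\<close>
    by (metis diff_le_eq add.commute minus_diff_eq)
  show ?thesis unfolding labs_def[of "negp x - negp y"] using 1 2 by (rule sup_least)
qed

lemma closed_cone: "closed {x::'a::banach_lattice. 0 \<le> x}"
  unfolding closed_sequential_limits
proof (intro allI impI, elim conjE)
  fix s and l :: 'a
  assume s: "\<forall>n. s n \<in> {x. 0 \<le> x}" and lim: "s \<longlonglongrightarrow> l"
  have sn: "negp (s n) = 0" for n
  proof -
    have "0 \<le> s n" using s by simp
    then have "- s n \<le> 0" by simp
    then show ?thesis unfolding negp_def by (rule sup_absorb2)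
  qed
  have b: "norm (negp l) \<le> norm (l - s n)" for n
    using lat_norm[OF negp_lip[of l "s n"]] sn[of n] by simp
  have "(\<lambda>n. s n - l) \<longlonglongrightarrow> 0" using lim by (rule LIM_zero)
  then have "(\<lambda>n. norm (s n - l)) \<longlonglongrightarrow> 0" by (rule tendsto_norm_zero)
  then have t: "(\<lambda>n. norm (l - s n)) \<longlonglongrightarrow> 0" by (simp add: norm_minus_commute)
  have "norm (negp l) \<le> 0"
    by (rule LIMSEQ_le_const[OF t]) (use b in blast)
  then have "negp l = 0" by simp
  then have "- l \<le> 0" unfolding negp_def by (metis sup.cobounded1)
  then show "l \<in> {x. 0 \<le> x}" by simp
qed

lemma disj_key:
  fixes y :: "nat \<Rightarrow> 'a::banach_lattice"
  assumes y0: "\<forall>k. 0 \<le> y k" and yu: "\<forall>k. y k \<le> u"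
    and dj: "\<forall>n m. n \<noteq> m \<longrightarrow> inf (y n) (y m) = 0" and w0: "0 \<le> w"
    and wle: "\<forall>v. 0 \<le> v \<and> (\<exists>N. \<forall>n\<ge>N. y n \<le> v) \<longrightarrow> w \<le> v"
  shows "w = 0"
proof -
  have step: "\<forall>k. y k \<le> v - w" if v: "\<forall>k. y k \<le> v" for v
  proof
    fix k
    have "\<forall>m\<ge>Suc k. y m \<le> v - y k"
    proof (intro allI impI)
      fix m assume "Suc k \<le> m"
      then have "m \<noteq> k" by simp
      then have "y m + y k = sup (y m) (y k)"
        using dj add_eq_inf_sup[of "y m" "y k"] by simp
      also have "\<dots> \<le> v" using v by simp
      finally show "y m \<le> v - y k" by (simp add: le_diff_eq)
    qed
    moreover have "0 \<le> v - y k" using v by simp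
    ultimately have "w \<le> v - y k" using wle by blast
    then show "y k \<le> v - w" by (simp add: le_diff_eq add.commute)
  qed
  have ind: "\<forall>k. y k \<le> u - real n *\<^sub>R w" for n
  proof (induction n)
    case 0 then show ?case using yu by simp
  next
    case (Suc n)
    have "u - real (Suc n) *\<^sub>R w = (u - real n *\<^sub>R w) - w" by (simp add: algebra_simps)
    then show ?case using step[OF Suc.IH] by metis
  qed
  have bnd: "real n * norm w \<le> norm u" for n
  proof -
    have "0 \<le> real n *\<^sub>R w" using w0 by (simp add: scaleR_nonneg_nonneg)
    moreover have "real n *\<^sub>R w \<le> u" using ind[of n] y0
      by (metis diff_ge_0_iff_ge order_trans)
    ultimately have "norm (real n *\<^sub>R w) \<le> norm u" by (rule norm_mono_pos)
    then show ?thesis by simp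
  qed
  show "w = 0"
  proof (rule ccontr)
    assume "w \<noteq> 0"
    then have p: "norm w > 0" by simp
    obtain n where "norm u / norm w < real n" using reals_Archimedean2 by blast
    then have "norm u < real n * norm w" using p by (simp add: divide_less_eq)
    with bnd[of n] show False by simp
  qed
qed



lemma tail_lemma:
  fixes d :: "nat \<Rightarrow> 'a::banach_lattice"
  assumes d0: "\<And>k. 0 \<le> d k" and dn: "\<And>k. norm (d k) \<le> (1/2)^k"
  defines "s \<equiv> \<lambda>N. (\<Sum>k. d (k + N))"
  shows "\<And>N n. N \<le> n \<Longrightarrow> d n \<le> s N" and "\<And>N. 0 \<le> s N"
    and "\<And>N. norm (s N) \<le> 2 * (1/2)^N"
proof -
  have g: "summable (\<lambda>k. (1/2::real)^(k+N))" for N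
    using summable_mult[OF summable_geometric[of "1/2::real"], of "(1/2)^N"]
    by (simp add: power_add mult.commute)
  have sn: "summable (\<lambda>k. norm (d (k + N)))" for N
    by (rule summable_comparison_test[OF _ g[of N]]) (auto intro: dn)
  have sm: "summable (\<lambda>k. d (k + N))" for N by (rule summable_norm_cancel[OF sn])
  show nn: "0 \<le> s N" for N
  proof -
    have "s N \<in> {x. 0 \<le> x}"
      unfolding s_def
      by (rule closed_sequentially[OF closed_cone _ summable_LIMSEQ[OF sm]])
         (auto intro: sum_nonneg d0)
    then show ?thesis by simp
  qed
  have split: "s N = d N + s (Suc N)" for N
    using suminf_split_head[OF sm[of N]] unfolding s_def by (simp add: algebra_simps)
  have dle: "d N \<le> s N" for N using split[of N] nn[of "Suc N"] by simp
  have dec: "s (Suc N) \<le> s N" for N using split[of N] d0[of N] by simp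
  have decn: "N \<le> n \<Longrightarrow> s n \<le> s N" for N n
  proof (induction n rule: dec_induct)
    case base then show ?case by simp
  next
    case (step n) then show ?case using dec[of n] by simp
  qed
  show "\<And>N n. N \<le> n \<Longrightarrow> d n \<le> s N" using dle decn order_trans by blast
  show "norm (s N) \<le> 2 * (1/2)^N" for N
  proof -
    have "norm (s N) \<le> (\<Sum>k. norm (d (k + N)))" unfolding s_def by (rule summable_norm[OF sn])
    also have "\<dots> \<le> (\<Sum>k. (1/2::real)^(k+N))"
      by (rule suminf_le[OF _ sn g]) (rule dn)
    also have "\<dots> = (1/2)^N * (\<Sum>k. (1/2::real)^k)"
      using suminf_mult[OF summable_geometric[of "1/2::real"], of "(1/2)^N"]
      by (simp add: power_add mult.commute)
    also have "\<dots> = 2 * (1/2)^N" using suminf_geometric[of "1/2::real"] by simp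
    finally show ?thesis .
  qed
qed



fun mkseq :: "(nat \<Rightarrow> nat) \<Rightarrow> nat \<Rightarrow> nat" where
  "mkseq N 0 = N 0"
| "mkseq N (Suc n) = max (N (Suc n)) (Suc (mkseq N n))"

lemma mkseq_mono: "strict_mono (mkseq N)"
  by (rule strict_monoI_Suc) simp

lemma mkseq_ge: "N n \<le> mkseq N n"
  by (cases n) auto

lemma uo_null_main:
  fixes e f :: "nat \<Rightarrow> 'a::banach_lattice" and r :: "nat \<Rightarrow> nat"
  assumes r: "strict_mono r" and df: "disjoint_seq f"
    and small: "\<And>k. norm (e (r k) - f (r k)) \<le> (1/2)^k"
  shows "uo_null (\<lambda>n. e (r n))"
  unfolding uo_null_def
proof (intro allI impI)
  fix h :: 'a assume h0: "0 \<le> h"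
  define y where "y n = inf (labs (f (r n))) h" for n
  define z where "z n = inf (labs (e (r n))) h" for n
  define d where "d n = labs (e (r n) - f (r n))" for n
  define D where "D = {g. 0 \<le> g \<and> (\<exists>N. \<forall>n\<ge>N. labs (z n) \<le> g)}"
  have z0: "labs (z n) = z n" for n
    by (rule labs_pos) (simp add: z_def labs_nonneg h0)
  define s where "s \<equiv> \<lambda>N. (\<Sum>k. d (k + N))"
  have d0: "\<And>k. 0 \<le> d k" unfolding d_def by (rule labs_nonneg)
  have dn: "\<And>k. norm (d k) \<le> (1/2)^k" unfolding d_def norm_labs by (rule small)
  note T0 = tail_lemma[of d, OF d0 dn]
  have T1: "N \<le> n \<Longrightarrow> d n \<le> s N" for N n using T0(1) unfolding s_def by simp
  have T2: "0 \<le> s N" for N using T0(2) unfolding s_def by simp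
  have T3: "norm (s N) \<le> 2 * (1/2)^N" for N using T0(3) unfolding s_def by simp
  have y0: "\<forall>k. 0 \<le> y k" by (simp add: y_def labs_nonneg h0)
  have yu: "\<forall>k. y k \<le> h" by (simp add: y_def)
  have dj: "\<forall>n m. n \<noteq> m \<longrightarrow> inf (y n) (y m) = 0"
  proof (intro allI impI)
    fix n m :: nat assume "n \<noteq> m"
    then have "r n \<noteq> r m" using r strict_mono_eq by metis
    then have "inf (labs (f (r n))) (labs (f (r m))) = 0" using df unfolding disjoint_seq_def by blast
    moreover have "inf (y n) (y m) \<le> inf (labs (f (r n))) (labs (f (r m)))"
      unfolding y_def by (intro inf_mono) auto
    moreover have "0 \<le> inf (y n) (y m)" using y0 by simp
    ultimately show "inf (y n) (y m) = 0" by (metis antisym)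
  qed
  have zle: "z n \<le> d n + y n" for n
  proof -
    have "labs (e (r n)) \<le> d n + labs (f (r n))"
      unfolding d_def using labs_triangle[of "e (r n) - f (r n)" "f (r n)"] by simp
    then have "z n \<le> inf (d n + labs (f (r n))) h" unfolding z_def by (intro inf_mono) auto
    also have "\<dots> \<le> d n + y n" unfolding y_def by (rule inf_add_le[OF d0])
    finally show ?thesis .
  qed
  have "down_to_zero D"
    unfolding down_to_zero_def
  proof (intro conjI ballI allI impI)
    show "D \<noteq> {}"
    proof -
      have "h \<in> D" unfolding D_def using h0 z0 by (auto simp: z_def)
      then show ?thesis by blast
    qed
  next
    fix a b assume a: "a \<in> D" and b: "b \<in> D"
    then obtain Na Nb where Na: "\<forall>n\<ge>Na. labs (z n) \<le> a" and Nb: "\<forall>n\<ge>Nb. labs (z n) \<le> b"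
      unfolding D_def by blast
    have "inf a b \<in> D" unfolding D_def using a b Na Nb
      by (auto simp: D_def intro!: exI[of _ "max Na Nb"])
    then show "\<exists>c\<in>D. c \<le> a \<and> c \<le> b" by (intro bexI[of _ "inf a b"]) auto
  next
    fix d assume "d \<in> D" then show "0 \<le> d" unfolding D_def by simp
  next
    fix l assume l: "\<forall>d\<in>D. l \<le> d"
    define w where "w = sup l 0"
    have wD: "w \<le> g" if "g \<in> D" for g using l that unfolding w_def D_def by auto
    have w0: "0 \<le> w" unfolding w_def by simp
    have wle: "\<forall>v. 0 \<le> v \<and> (\<exists>N. \<forall>n\<ge>N. y n \<le> v) \<longrightarrow> w \<le> v"
    proof (intro allI impI, elim conjE exE)
      fix v M assume v0: "0 \<le> v" and M: "\<forall>n\<ge>M. y n \<le> v"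
      have bndK: "norm (sup (w - v) 0) \<le> 2 * (1/2)^K" for K
      proof -
        have "v + s K \<in> D" unfolding D_def
        proof (intro CollectI conjI exI[of _ "max K M"] allI impI)
          show "0 \<le> v + s K" using v0 T2[of K] by simp
          fix n assume "max K M \<le> n"
          then have "d n \<le> s K" "y n \<le> v" using T1[of K n] M by auto
          then have "d n + y n \<le> s K + v" by (rule add_mono)
          then have "z n \<le> s K + v" using zle[of n] by (rule order_trans[rotated])
          then show "labs (z n) \<le> v + s K" using z0[of n] by (simp add: add.commute)
        qed
        then have "w \<le> v + s K" by (rule wD)
        then have "sup (w - v) 0 \<le> s K" using T2[of K]
          by (simp add: diff_le_eq add.commute)
        then show ?thesis using norm_mono_pos[of "sup (w - v) 0" "s K"] T3[of K] by simp
      qed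
      have "sup (w - v) 0 = 0"
      proof (rule ccontr)
        assume "sup (w - v) 0 \<noteq> 0"
        then have p: "norm (sup (w - v) 0) > 0" by simp
        obtain K where "(1/2::real)^K < norm (sup (w - v) 0) / 2"
          using real_arch_pow_inv[of "norm (sup (w - v) 0) / 2" "1/2::real"] p by auto
        with bndK[of K] show False by simp
      qed
      then show "w \<le> v" by (metis diff_le_0_iff_le sup.cobounded1)
    qed
    have "w = 0" by (rule disj_key[OF y0 yu dj w0 wle])
    then show "l \<le> 0" unfolding w_def by (metis sup.cobounded1)
  qed
  moreover have "\<forall>g\<in>D. \<exists>N. \<forall>n\<ge>N. labs (z n) \<le> g" unfolding D_def by blast
  ultimately show "order_null (\<lambda>n. inf (labs (e (r n))) h)"
    unfolding order_null_def z_def by blast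
qed

theorem mainTheorem19:
  fixes E :: "'a::banach_lattice set"
  assumes "closed E" and "subspace E"
    and "\<forall>x. (\<forall>n. x n \<in> E) \<longrightarrow> uo_null x \<longrightarrow> (\<lambda>n. norm (x n)) \<longlonglongrightarrow> 0"
  shows "dispersed E"
  unfolding dispersed_def
proof
  assume "\<exists>e f. (\<forall>n. e n \<in> E \<and> norm (e n) = 1) \<and> disjoint_seq f
      \<and> (\<lambda>n. norm (e n - f n)) \<longlonglongrightarrow> 0"
  then obtain e f where eE: "\<forall>n. e n \<in> E \<and> norm (e n) = 1" and df: "disjoint_seq f"
    and lim: "(\<lambda>n. norm (e n - f n)) \<longlonglongrightarrow> 0" by blast
  have "\<forall>n. \<exists>M. \<forall>m\<ge>M. norm (e m - f m) < (1/2)^n"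
  proof
    fix n :: nat
    have "(0::real) < (1/2)^n" by simp
    from LIMSEQ_D[OF lim this] obtain M where "\<forall>m\<ge>M. norm (norm (e m - f m) - 0) < (1/2)^n" by blast
    then show "\<exists>M. \<forall>m\<ge>M. norm (e m - f m) < (1/2)^n" by auto
  qed
  then obtain N where N0: "\<forall>n. \<forall>m\<ge>N n. norm (e m - f m) < (1/2)^n"
    using choice[of "\<lambda>n M. \<forall>m\<ge>M. norm (e m - f m) < (1/2)^n"] by blast
  have N: "\<And>n m. m \<ge> N n \<Longrightarrow> norm (e m - f m) < (1/2)^n" using N0 by blast
  define r where "r = mkseq N"
  have r: "strict_mono r" unfolding r_def by (rule mkseq_mono)
  have small: "norm (e (r k) - f (r k)) \<le> (1/2)^k" for k
    using N[of k "r k"] mkseq_ge[of N k] unfolding r_def by simp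
  have "uo_null (\<lambda>n. e (r n))" by (rule uo_null_main[OF r df small])
  moreover have inE: "\<forall>n. e (r n) \<in> E" using eE by simp
  ultimately have "(\<lambda>n. norm (e (r n))) \<longlonglongrightarrow> 0" using assms(3)[rule_format, of "\<lambda>n. e (r n)"] by simp
  moreover have "(\<lambda>n. norm (e (r n))) = (\<lambda>n. 1)" using eE by simp
  ultimately have "(\<lambda>n. 1::real) \<longlonglongrightarrow> 0" by simp
  then have "(1::real) = 0" by (rule LIMSEQ_unique[OF tendsto_const])
  then show False by simp
qed

end
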